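(* Let $d,D,T,V,\mathcal H,g$ be as in the context, with eigenvalues $(\lambda_{\mathsf m})_{\mathsf m\in\mathbb{N}^d}$ and real orthonormal eigenfunctions $(\mathsf f_{\mathsf m})_{\mathsf m\in\mathbb{N}^d}$ of $\mathcal H$. For each $\mathsf m\in\mathbb{N}^d$ let $$\mu_{\mathsf m}(G)=\int_G\mathsf{dx\,dy}\,\mathsf f_{\mathsf m}(\mathsf x)g(\mathsf x,T,\mathsf y)\,e^{T\lambda_{\mathsf m}}\mathsf f_{\mathsf m}(\mathsf y),\qquad G\in\mathcal B(\overline D)\times\mathcal B(\overline D).$$ Then $\mu_{\mathsf m}$ is a signed measure. Moreover, if $\mathcal Z(T):=\sum_{\mathsf n\in\mathbb{N}^d}e^{-T\lambda_{\mathsf n}}<+\infty$, then $\mu_{\mathsf m}(D\times D)=1$.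
   Context: $d\in\mathbb{N}^+$, $D\subset\mathbb{R}^d$ open bounded with sufficiently smooth boundary, $T>0$, $V:D\to\mathbb{R}$ bounded from below with $V\in L^p(D)$, $p\in[1,\infty]$ if $d=1$, $p\in(1,\infty]$ if $d=2$, $p\in[d/2,\infty]$ if $d\ge3$. $\mathcal H=-\frac12\Delta_{\mathsf x}+V$ with Neumann Laplacian is self-adjoint with compact resolvent in $L^2(D)$, pure point spectrum $\lambda_{\mathsf m}\to\infty$ as $|\mathsf m|\to\infty$, and real eigenfunctions $\mathsf f_{\mathsf m}$ forming an orthonormal basis. $g(\mathsf x,t,\mathsf y)$ is the heat kernel of $\mathcal H$ (integral kernel of $e^{-t\mathcal H}$), symmetric and positive on $\overline D\times\overline D$ for $t\in(0,T]$. *)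

theory Defs
  imports "HOL-Analysis.Analysis"
begin

definition real_signed_measure :: "'a measure \<Rightarrow> ('a set \<Rightarrow> real) \<Rightarrow> bool" where
  "real_signed_measure M \<nu> \<longleftrightarrow>
     \<nu> {} = 0 \<and>
     (\<forall>A :: nat \<Rightarrow> 'a set. range A \<subseteq> sets M \<longrightarrow> disjoint_family A \<longrightarrow>
         (\<lambda>n. \<nu> (A n)) sums \<nu> (\<Union>n. A n))"

definition L2_on :: "('n::euclidean_space) set \<Rightarrow> ('n \<Rightarrow> real) \<Rightarrow> bool" where
  "L2_on D u \<longleftrightarrow> u \<in> borel_measurable lborel \<and> set_integrable lborel D (\<lambda>x. (u x)\<^sup>2)"

definition heat_mu ::
  "('n::euclidean_space \<Rightarrow> real) \<Rightarrow> real \<Rightarrow> ('n \<Rightarrow> real \<Rightarrow> 'n \<Rightarrow> real) \<Rightarrow> real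
     \<Rightarrow> ('n \<times> 'n) set \<Rightarrow> real" where
  "heat_mu f lam g T G =
     (LINT z:G|(lborel \<Otimes>\<^sub>M lborel). f (fst z) * g (fst z) T (snd z) * exp (T * lam) * f (snd z))"

end

theory Submission
  imports Defs
begin


lemma countable_add_sums:
  fixes f :: "_ \<Rightarrow> real"
  assumes meas[intro]: "\<And>i::nat. A i \<in> sets M"
    and disj: "\<And>i j. i \<noteq> j \<Longrightarrow> A i \<inter> A j = {}"
    and intgbl: "set_integrable M (\<Union>i. A i) f"
  shows "(\<lambda>i. (LINT x:(A i)|M. f x)) sums (LINT x:(\<Union>i. A i)|M. f x)"
proof -
  have int_A: "integrable M (\<lambda>x. indicat_real (A i) x *\<^sub>R f x)" for i
    using intgbl unfolding set_integrable_def [symmetric]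
    by (rule set_integrable_subset) auto
  { fix x
    have "(\<lambda>i. indicator (A i) x *\<^sub>R f x) sums (indicator (\<Union>i. A i) x *\<^sub>R f x)"
      by (intro sums_scaleR_left indicator_sums) (simp add: disjoint_family_on_def disj) }
  note sums = this
  have norm_f: "\<And>i. set_integrable M (A i) (\<lambda>x. norm (f x))"
    using int_A[THEN integrable_norm] unfolding set_integrable_def by (simp add: abs_mult)
  have si: "summable (\<lambda>i. indicator (A i) x :: real)" for x
    by (rule sums_summable[OF indicator_sums]) (simp add: disjoint_family_on_def disj)
  have s1: "AE x in M. summable (\<lambda>i. norm (indicator (A i) x *\<^sub>R f x))"
    by (intro AE_I2) (simp add: abs_mult summable_mult2[OF si])
  have s2: "summable (\<lambda>i. LINT x|M. norm (indicator (A i) x *\<^sub>R f x))"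
  proof (rule summableI_nonneg_bounded)
    fix n
    show "0 \<le> LINT x|M. norm (indicator (A n) x *\<^sub>R f x)"
      using norm_f by (auto intro!: integral_nonneg_AE)
    have "(\<Sum>i<n. LINT x|M. norm (indicator (A i) x *\<^sub>R f x)) = (\<Sum>i<n. LINT x:A i|M. norm (f x))"
      by (simp add: abs_mult set_lebesgue_integral_def)
    also have "\<dots> = set_lebesgue_integral M (\<Union>i<n. A i) (\<lambda>x. norm (f x))"
      using norm_f
      by (subst set_integral_finite_Union) (auto simp: disjoint_family_on_def disj)
    also have "\<dots> \<le> set_lebesgue_integral M (\<Union>i. A i) (\<lambda>x. norm (f x))"
      using intgbl[unfolded set_integrable_def, THEN integrable_norm] norm_f
      unfolding set_lebesgue_integral_def set_integrable_def
      apply (intro integral_mono set_integrable_UN[of "{..<n}", unfolded set_integrable_def])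
          apply (auto simp: abs_mult split: split_indicator)
      done
    finally show "(\<Sum>i<n. LINT x|M. norm (indicator (A i) x *\<^sub>R f x)) \<le>
      set_lebesgue_integral M (\<Union>i. A i) (\<lambda>x. norm (f x))"
      by simp
  qed
  have "(\<lambda>i. LINT x|M. indicator (A i) x *\<^sub>R f x) sums (LINT x|M. (\<Sum>i. indicator (A i) x *\<^sub>R f x))"
    by (rule sums_integral[OF int_A s1 s2])
  moreover have "(LINT x|M. (\<Sum>i. indicator (A i) x *\<^sub>R f x)) = (LINT x|M. indicator (\<Union>i. A i) x *\<^sub>R f x)"
    by (metis (no_types, lifting) sums sums_unique)
  ultimately show ?thesis unfolding set_lebesgue_integral_def by simp
qed

theorem lemma1:
  fixes D :: "(real ^ 'd) set"
    and T :: real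
    and lam :: "nat ^ 'd \<Rightarrow> real"
    and f :: "nat ^ 'd \<Rightarrow> real ^ 'd \<Rightarrow> real"
    and g :: "real ^ 'd \<Rightarrow> real \<Rightarrow> real ^ 'd \<Rightarrow> real"
  assumes D_open: "open D" and D_bounded: "bounded D"
    and D_boundary_null: "frontier D \<in> null_sets lborel"
    and T_pos: "T > 0"
    \<comment> \<open>pure point spectrum, eigenvalues tending to infinity\<close>
    and lam_to_infty: "filterlim lam at_top cofinite"
    \<comment> \<open>real eigenfunctions forming an orthonormal basis of L^2(D)\<close>
    and f_L2: "\<And>m. L2_on D (f m)"
    and f_orthonormal: "\<And>m n. (LINT x:D|lborel. f m x * f n x) = (if m = n then 1 else 0)"
    and f_complete: "\<And>u. L2_on D u \<Longrightarrow> (\<forall>n. (LINT x:D|lborel. u x * f n x) = 0)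
                       \<Longrightarrow> (AE x\<in>D in lborel. u x = 0)"
    \<comment> \<open>g is symmetric, positive and jointly measurable on closure D x closure D\<close>
    and g_meas: "\<And>t. t \<in> {0<..T} \<Longrightarrow>
                   (\<lambda>z. g (fst z) t (snd z)) \<in> borel_measurable (lborel \<Otimes>\<^sub>M lborel)"
    and g_sym: "\<And>x t y. t \<in> {0<..T} \<Longrightarrow> x \<in> closure D \<Longrightarrow> y \<in> closure D \<Longrightarrow>
                   g x t y = g y t x"
    and g_pos: "\<And>x t y. t \<in> {0<..T} \<Longrightarrow> x \<in> closure D \<Longrightarrow> y \<in> closure D \<Longrightarrow>
                   g x t y > 0"
    \<comment> \<open>g(.,t,.) is the integral kernel of exp(-t H), H = sum_n lam_n <.,f_n> f_n\<close>
    and g_kernel: "\<And>t u. t \<in> {0<..T} \<Longrightarrow> L2_on D u \<Longrightarrow>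
           (AE x\<in>D in lborel. set_integrable lborel D (\<lambda>y. g x t y * u y)) \<and>
           L2_on D (\<lambda>x. LINT y:D|lborel. g x t y * u y) \<and>
           (\<forall>n. (LINT x:D|lborel. (LINT y:D|lborel. g x t y * u y) * f n x)
                  = exp (- t * lam n) * (LINT x:D|lborel. u x * f n x))"
  shows "(\<forall>m. real_signed_measure
                 (restrict_space (lborel \<Otimes>\<^sub>M lborel) (closure D \<times> closure D))
                 (heat_mu (f m) (lam m) g T))
       \<and> ((\<lambda>n. exp (- T * lam n)) summable_on UNIV
            \<longrightarrow> (\<forall>m. heat_mu (f m) (lam m) g T (D \<times> D) = 1))"
proof -
  have Dsets[measurable]: "D \<in> sets lborel" using D_open by simp
  have Csets[measurable]: "closure D \<in> sets lborel" by simp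
  have key: "set_integrable (lborel \<Otimes>\<^sub>M lborel) (D \<times> D)
               (\<lambda>z. f m (fst z) * g (fst z) T (snd z) * exp (T * lam m) * f m (snd z))
          \<and> heat_mu (f m) (lam m) g T (D \<times> D) = 1" for m
  proof -
    define F where "F = f m"
    define c where "c = exp (T * lam m)"
    have TT: "T \<in> {0<..T}" using T_pos by simp
    have FL: "L2_on D F" unfolding F_def by (rule f_L2)
    have Fm[measurable]: "F \<in> borel_measurable lborel" using FL unfolding L2_on_def by simp
    have gm[measurable]: "(\<lambda>z. g (fst z) T (snd z)) \<in> borel_measurable (lborel \<Otimes>\<^sub>M lborel)"
      using g_meas[OF TT] .
    have F2: "set_integrable lborel D (\<lambda>x. (F x)\<^sup>2)" using FL unfolding L2_on_def by simp
    have aFL: "L2_on D (\<lambda>y. \<bar>F y\<bar>)" using FL unfolding L2_on_def by simp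
    define K where "K x = (LINT y:D|lborel. g x T y * \<bar>F y\<bar>)" for x
    note gkA = g_kernel[OF TT aFL]
    have KL: "L2_on D K" using gkA unfolding K_def by simp
    have Km[measurable]: "K \<in> borel_measurable lborel" using KL unfolding L2_on_def by simp
    have K2: "set_integrable lborel D (\<lambda>x. (K x)\<^sup>2)" using KL unfolding L2_on_def by simp
    note gkF = g_kernel[OF TT FL]
    define H where "H z = indicator (D \<times> D) z * (F (fst z) * g (fst z) T (snd z) * c * F (snd z))" for z
    have Hm[measurable]: "H \<in> borel_measurable (lborel \<Otimes>\<^sub>M lborel)" unfolding H_def by measurable
    have gnn: "x \<in> D \<Longrightarrow> y \<in> D \<Longrightarrow> 0 < g x T y" for x y
      using g_pos[OF TT] closure_subset by blast
    have Hint: "integrable (lborel \<Otimes>\<^sub>M lborel) H"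
    proof (rule lborel_pair.Fubini_integrable)
      show "AE x in lborel. integrable lborel (\<lambda>y. H (x, y))"
      proof -
        have "AE x in lborel. x \<in> D \<longrightarrow> set_integrable lborel D (\<lambda>y. g x T y * F y)"
          using gkF by simp
        then show ?thesis
        proof (rule AE_mp, intro AE_I2 impI)
          fix x assume A: "x \<in> D \<longrightarrow> set_integrable lborel D (\<lambda>y. g x T y * F y)"
          show "integrable lborel (\<lambda>y. H (x, y))"
          proof (cases "x \<in> D")
            case True
            then have "integrable lborel (\<lambda>y. (c * F x) * (indicator D y * (g x T y * F y)))"
              using A unfolding set_integrable_def by simp
            moreover have "(\<lambda>y. H (x, y)) = (\<lambda>y. (c * F x) * (indicator D y * (g x T y * F y)))"
              by (auto simp: fun_eq_iff H_def True split: split_indicator)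
            ultimately show ?thesis by simp
          qed (simp add: H_def)
        qed
      qed
      have eq: "(\<integral>y. norm (H (x, y)) \<partial>lborel) = indicator D x * c * \<bar>F x\<bar> * K x" for x
      proof (cases "x \<in> D")
        case True
        have "(\<integral>y. norm (H (x, y)) \<partial>lborel) = (\<integral>y. (c * \<bar>F x\<bar>) * (indicator D y * (g x T y * \<bar>F y\<bar>)) \<partial>lborel)"
          by (rule Bochner_Integration.integral_cong)
             (auto simp: H_def True c_def abs_mult gnn less_imp_le split: split_indicator)
        also have "\<dots> = c * \<bar>F x\<bar> * K x"
          by (simp add: K_def set_lebesgue_integral_def)
        finally show ?thesis using True by simp
      qed (simp add: H_def)
      show "integrable lborel (\<lambda>x. \<integral>y. norm (H (x, y)) \<partial>lborel)"
        unfolding eq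
      proof (rule Bochner_Integration.integrable_bound)
        show "integrable lborel (\<lambda>x. c * (indicator D x * (F x)\<^sup>2 + indicator D x * (K x)\<^sup>2))"
          using F2 K2 unfolding set_integrable_def by simp
        show "AE x in lborel. norm (indicator D x * c * \<bar>F x\<bar> * K x)
               \<le> norm (c * (indicator D x * (F x)\<^sup>2 + indicator D x * (K x)\<^sup>2))"
        proof (intro AE_I2)
          fix x
          have "2 * (\<bar>F x\<bar> * \<bar>K x\<bar>) \<le> (F x)\<^sup>2 + (K x)\<^sup>2"
            using sum_squares_bound[of "\<bar>F x\<bar>" "\<bar>K x\<bar>"] by (simp add: mult.assoc)
          moreover have "0 \<le> \<bar>F x\<bar> * \<bar>K x\<bar>" by simp
          ultimately have b: "\<bar>F x\<bar> * \<bar>K x\<bar> \<le> (F x)\<^sup>2 + (K x)\<^sup>2" by linarith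
          have cp: "c > 0" by (simp add: c_def)
          have "c * (\<bar>F x\<bar> * \<bar>K x\<bar>) \<le> c * ((F x)\<^sup>2 + (K x)\<^sup>2)"
            using b cp by (intro mult_left_mono) auto
          moreover have "0 \<le> c * ((F x)\<^sup>2 + (K x)\<^sup>2)" using cp by simp
          ultimately show "norm (indicator D x * c * \<bar>F x\<bar> * K x)
               \<le> norm (c * (indicator D x * (F x)\<^sup>2 + indicator D x * (K x)\<^sup>2))"
            using cp by (cases "x \<in> D") (simp_all add: abs_mult mult.assoc)
        qed
      qed measurable
    qed (rule Hm)
    have si: "set_integrable (lborel \<Otimes>\<^sub>M lborel) (D \<times> D)
               (\<lambda>z. f m (fst z) * g (fst z) T (snd z) * exp (T * lam m) * f m (snd z))"
      using Hint unfolding set_integrable_def H_def F_def c_def by simp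
    have "heat_mu (f m) (lam m) g T (D \<times> D) = integral\<^sup>L (lborel \<Otimes>\<^sub>M lborel) H"
      unfolding heat_mu_def set_lebesgue_integral_def H_def F_def c_def by simp
    also have "\<dots> = (\<integral>x. (\<integral>y. H (x, y) \<partial>lborel) \<partial>lborel)"
      using lborel_pair.integral_fst'[OF Hint] by simp
    also have "\<dots> = (\<integral>x. c * (indicator D x * ((LINT y:D|lborel. g x T y * F y) * F x)) \<partial>lborel)"
    proof (rule Bochner_Integration.integral_cong[OF refl])
      fix x
      show "(\<integral>y. H (x, y) \<partial>lborel) = c * (indicator D x * ((LINT y:D|lborel. g x T y * F y) * F x))"
      proof (cases "x \<in> D")
        case True
        have "(\<integral>y. H (x, y) \<partial>lborel) = (\<integral>y. (c * F x) * (indicator D y * (g x T y * F y)) \<partial>lborel)"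
          by (rule Bochner_Integration.integral_cong) (auto simp: H_def True split: split_indicator)
        then show ?thesis using True by (simp add: set_lebesgue_integral_def)
      qed (simp add: H_def)
    qed
    also have "\<dots> = c * (LINT x:D|lborel. (LINT y:D|lborel. g x T y * F y) * F x)"
      by (simp add: set_lebesgue_integral_def)
    also have "\<dots> = c * (exp (- T * lam m) * (LINT x:D|lborel. F x * F x))"
      using gkF unfolding F_def by simp
    also have "\<dots> = 1"
      using f_orthonormal[of m m] by (simp add: F_def c_def exp_minus_inverse[symmetric] mult_exp_exp)
    finally show ?thesis using si by simp
  qed
  show ?thesis
  proof (intro conjI allI impI)
    fix m
    let ?h = "\<lambda>z. f m (fst z) * g (fst z) T (snd z) * exp (T * lam m) * f m (snd z)"
    let ?M = "lborel \<Otimes>\<^sub>M lborel :: ((real ^ 'd) \<times> (real ^ 'd)) measure"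
    have TT: "T \<in> {0<..T}" using T_pos by simp
    have Fm[measurable]: "f m \<in> borel_measurable lborel" using f_L2[of m] unfolding L2_on_def by simp
    have gm[measurable]: "(\<lambda>z. g (fst z) T (snd z)) \<in> borel_measurable (lborel \<Otimes>\<^sub>M lborel)"
      using g_meas[OF TT] .
    have CC[measurable]: "closure D \<times> closure D \<in> sets ?M" by (intro pair_measureI) simp_all
    have N: "frontier D \<times> UNIV \<union> UNIV \<times> frontier D \<in> null_sets ?M"
      using D_boundary_null by (intro null_sets.Un lborel.times_in_null_sets1 lborel.times_in_null_sets2) auto
    have "AE z in ?M. indicator (D \<times> D) z * ?h z = indicator (closure D \<times> closure D) z * ?h z"
    proof (rule AE_I'[OF N], rule subsetI)
      fix z assume "z \<in> {z \<in> space ?M. \<not> (indicator (D \<times> D) z * ?h z = indicator (closure D \<times> closure D) z * ?h z)}"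
      then have ne: "\<not> ((fst z \<in> D \<and> snd z \<in> D) = (fst z \<in> closure D \<and> snd z \<in> closure D))"
        by (cases z) (auto simp: indicator_def)
      have fr: "closure D - D \<subseteq> frontier D" using D_open by (simp add: frontier_def interior_open)
      have "fst z \<in> frontier D \<or> snd z \<in> frontier D"
        using ne fr closure_subset[of D] by blast
      then show "z \<in> frontier D \<times> UNIV \<union> UNIV \<times> frontier D" by (cases z) auto
    qed
    note ae = this
    have i1: "integrable ?M (\<lambda>z. indicator (D \<times> D) z * ?h z)"
      using key[of m] unfolding set_integrable_def by simp
    have i2: "(\<lambda>z. indicator (closure D \<times> closure D) z * ?h z) \<in> borel_measurable ?M"
      by measurable
    have siC: "set_integrable ?M (closure D \<times> closure D) ?h"
      unfolding set_integrable_def using integrable_cong_AE_imp[OF i1 i2 ae] by simp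
    show "real_signed_measure (restrict_space ?M (closure D \<times> closure D)) (heat_mu (f m) (lam m) g T)"
      unfolding real_signed_measure_def
    proof (intro conjI allI impI)
      show "heat_mu (f m) (lam m) g T {} = 0" by (simp add: heat_mu_def set_lebesgue_integral_def)
      fix A :: "nat \<Rightarrow> _" assume rA: "range A \<subseteq> sets (restrict_space ?M (closure D \<times> closure D))"
        and dA: "disjoint_family A"
      have sr: "closure D \<times> closure D \<inter> space ?M \<in> sets ?M" using CC by (simp add: space_pair_measure)
      have An: "A i \<subseteq> closure D \<times> closure D \<and> A i \<in> sets ?M" for i
        using rA sets_restrict_space_iff[OF sr] by auto
      have U: "(\<Union>i. A i) \<in> sets ?M" using An by auto
      have "(\<lambda>i. (LINT z:(A i)|?M. ?h z)) sums (LINT z:(\<Union>i. A i)|?M. ?h z)"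
      proof (rule countable_add_sums)
        show "A i \<in> sets ?M" for i using An by simp
        show "A i \<inter> A j = {}" if "i \<noteq> j" for i j using dA that by (simp add: disjoint_family_on_def)
        show "set_integrable ?M (\<Union>i. A i) ?h"
          by (rule set_integrable_subset[OF siC U]) (use An in auto)
      qed
      then show "(\<lambda>n. heat_mu (f m) (lam m) g T (A n)) sums heat_mu (f m) (lam m) g T (\<Union>n. A n)"
        unfolding heat_mu_def .
    qed
  next
    fix m show "heat_mu (f m) (lam m) g T (D \<times> D) = 1" using key[of m] by simp
  qed
qed

end
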